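(* Let $\mathcal D=\{(i_m,\mathbf X_m,S_m)\}_{m=1}^t$ with $S_m\subseteq[N]$ and features $\mathbf x_{mj}\in\mathbb R^d$, and let $\boldsymbol\theta^\star\in\mathbb R^d$. For any $\boldsymbol\theta\in\mathbb R^d$, with $\zeta_{\boldsymbol\theta}=3\sqrt2\max_{m\le t,j\in S_m}|\mathbf x_{mj}^\top(\boldsymbol\theta-\boldsymbol\theta^\star)|$ and $\varphi(\zeta)=\big(\frac{e^\zeta-1}\zeta-1\big)(1+\zeta)$, $$\frac1{1+2\varphi(\zeta_{\boldsymbol\theta})}\mathbf H(\boldsymbol\theta^\star)\preceq\mathbf H(\boldsymbol\theta)\preceq(1+2\varphi(\zeta_{\boldsymbol\theta}))\mathbf H(\boldsymbol\theta^\star).$$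
   Context: $q_{mj}(\boldsymbol\theta)=\exp(\mathbf x_{mj}^\top\boldsymbol\theta)/(1+\sum_{k\in S_m}\exp(\mathbf x_{mk}^\top\boldsymbol\theta))$ for $j\in S_m$. $\mathbf H(\boldsymbol\theta)=\sum_{m=1}^t\Big(\sum_{j\in S_m}q_{mj}(\boldsymbol\theta)\mathbf x_{mj}\mathbf x_{mj}^\top-\sum_{i\in S_m}\sum_{j\in S_m}q_{mi}(\boldsymbol\theta)q_{mj}(\boldsymbol\theta)\mathbf x_{mi}\mathbf x_{mj}^\top\Big)$, the Hessian of the MNL negative log-likelihood of $\mathcal D$. $\varphi(0)$ is understood as its limit $0$. *)

theory Defs
  imports "HOL-Analysis.Analysis"
begin

definition outer :: "real^'d \<Rightarrow> real^'d \<Rightarrow> real^'d^'d" where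
  "outer u v = (\<chi> i j. u $ i * v $ j)"

definition mnl_q :: "(nat \<Rightarrow> nat set) \<Rightarrow> (nat \<Rightarrow> nat \<Rightarrow> real^'d) \<Rightarrow> real^'d \<Rightarrow> nat \<Rightarrow> nat \<Rightarrow> real" where
  "mnl_q S x \<theta> m j = exp (x m j \<bullet> \<theta>) / (1 + (\<Sum>k\<in>S m. exp (x m k \<bullet> \<theta>)))"

text \<open>Hessian of the MNL negative log-likelihood of the data set (rounds m = 1..t).\<close>
definition mnl_H :: "nat \<Rightarrow> (nat \<Rightarrow> nat set) \<Rightarrow> (nat \<Rightarrow> nat \<Rightarrow> real^'d) \<Rightarrow> real^'d \<Rightarrow> real^'d^'d" where
  "mnl_H t S x \<theta> = (\<Sum>m\<in>{1..t}.
      (\<Sum>j\<in>S m. mnl_q S x \<theta> m j *\<^sub>R outer (x m j) (x m j))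
    - (\<Sum>i\<in>S m. \<Sum>j\<in>S m. (mnl_q S x \<theta> m i * mnl_q S x \<theta> m j) *\<^sub>R outer (x m i) (x m j)))"

text \<open>phi(zeta) = ((e^zeta - 1)/zeta - 1)(1 + zeta), with phi(0) = 0 (its limit).\<close>
definition phi :: "real \<Rightarrow> real" where
  "phi z = (if z = 0 then 0 else ((exp z - 1) / z - 1) * (1 + z))"

text \<open>zeta_theta = 3 sqrt 2 max_{m \<le> t, j \<in> S_m} |x_mj^T (theta - theta*)|
  (the max over an empty index set is taken as 0).\<close>
definition zeta :: "nat \<Rightarrow> (nat \<Rightarrow> nat set) \<Rightarrow> (nat \<Rightarrow> nat \<Rightarrow> real^'d) \<Rightarrow> real^'d \<Rightarrow> real^'d \<Rightarrow> real" where
  "zeta t S x \<theta> \<theta>s = 3 * sqrt 2 *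
     Max (insert 0 {\<bar>x m j \<bullet> (\<theta> - \<theta>s)\<bar> | m j. m \<in> {1..t} \<and> j \<in> S m})"

definition loewner_le :: "real^'d^'d \<Rightarrow> real^'d^'d \<Rightarrow> bool" where
  "loewner_le A B \<longleftrightarrow> (\<forall>v. v \<bullet> (A *v v) \<le> v \<bullet> (B *v v))"

end

theory Submission
  imports Defs
begin

definition QF :: "real^'d^'d \<Rightarrow> real^'d \<Rightarrow> real" where
  "QF A v = v \<bullet> (A *v v)"

lemma QF_expand: "QF A v = (\<Sum>i\<in>UNIV. \<Sum>j\<in>UNIV. v$i * A$i$j * v$j)"
  by (simp add: QF_def matrix_vector_mult_def inner_vec_def sum_distrib_left mult.assoc)

lemma QF_add: "QF (A + B) v = QF A v + QF B v"
  by (simp add: QF_expand algebra_simps sum.distrib)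

lemma QF_diff: "QF (A - B) v = QF A v - QF B v"
  by (simp add: QF_expand algebra_simps sum_subtractf)

lemma QF_scale: "QF (c *\<^sub>R A) v = c * QF A v"
  by (simp add: QF_expand algebra_simps sum_distrib_left)

lemma QF_zero: "QF 0 v = 0"
  by (simp add: QF_expand)

lemma QF_sum: "QF (sum f A) v = (\<Sum>a\<in>A. QF (f a) v)"
proof (cases "finite A")
  case True
  then show ?thesis by (induction A rule: finite_induct) (simp_all add: QF_zero QF_add)
qed (simp add: QF_zero)

lemma QF_outer: "QF (outer a b) v = (v \<bullet> a) * (v \<bullet> b)"
  by (simp add: QF_expand outer_def inner_vec_def sum_product algebra_simps)

definition qq :: "(nat \<Rightarrow> real) \<Rightarrow> nat set \<Rightarrow> nat \<Rightarrow> real" where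
  "qq u S j = exp (u j) / (1 + (\<Sum>k\<in>S. exp (u k)))"

definition VV :: "(nat \<Rightarrow> real) \<Rightarrow> nat set \<Rightarrow> (nat \<Rightarrow> real) \<Rightarrow> real" where
  "VV u S a = (\<Sum>j\<in>S. qq u S j * (a j)^2) - (\<Sum>j\<in>S. qq u S j * a j)^2"

lemma F_identity:
  fixes q a :: "nat \<Rightarrow> real"
  assumes "q0 + sum q S = 1"
  shows "q0 * m^2 + (\<Sum>j\<in>S. q j * (a j - m)^2)
     = ((\<Sum>j\<in>S. q j * (a j)^2) - (\<Sum>j\<in>S. q j * a j)^2) + (m - (\<Sum>j\<in>S. q j * a j))^2"
proof -
  have "(\<Sum>j\<in>S. q j * (a j - m)^2) = (\<Sum>j\<in>S. q j * (a j)^2) - 2 * m * (\<Sum>j\<in>S. q j * a j) + m^2 * sum q S"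
    by (simp add: power2_eq_square algebra_simps sum.distrib sum_subtractf sum_distrib_left)
  moreover have "sum q S = 1 - q0" using assms by simp
  ultimately show ?thesis by (simp add: power2_eq_square algebra_simps)
qed

lemma D_pos: "finite S \<Longrightarrow> 0 < 1 + (\<Sum>k\<in>S. exp ((u::nat\<Rightarrow>real) k))"
  by (smt (verit) exp_gt_zero sum_nonneg)

lemma qq_total: assumes "finite S"
  shows "1 / (1 + (\<Sum>k\<in>S. exp (u k))) + sum (qq u S) S = 1"
proof -
  have D: "0 < 1 + (\<Sum>k\<in>S. exp (u k))" using D_pos[OF assms] .
  have "sum (qq u S) S = (\<Sum>k\<in>S. exp (u k)) / (1 + (\<Sum>k\<in>S. exp (u k)))"
    by (simp add: qq_def sum_divide_distrib)
  then show ?thesis using D by (simp add: field_simps)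
qed

lemma VV_eq: fixes u a :: "nat \<Rightarrow> real" assumes "finite S"
  defines "A \<equiv> (\<Sum>j\<in>S. qq u S j * a j)"
  shows "VV u S a = 1 / (1 + (\<Sum>k\<in>S. exp (u k))) * A^2 + (\<Sum>j\<in>S. qq u S j * (a j - A)^2)"
  using F_identity[OF qq_total[OF \<open>finite S\<close>], where m=A and a=a] unfolding VV_def A_def by simp

lemma VV_nonneg: assumes "finite S" shows "0 \<le> VV u S a"
proof -
  have "0 \<le> qq u S j" for j using D_pos[OF assms, of u] by (simp add: qq_def)
  then show ?thesis using VV_eq[OF assms, of u a] D_pos[OF assms, of u]
    by (simp add: sum_nonneg)
qed

lemma VV_lower:
  assumes S: "finite S" and M: "0 \<le> M" and d: "\<forall>j\<in>S. \<bar>u' j - u j\<bar> \<le> M"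
  shows "exp (-2*M) * VV u S a \<le> VV u' S a"
proof -
  define D where "D = 1 + (\<Sum>k\<in>S. exp (u k))"
  define D' where "D' = 1 + (\<Sum>k\<in>S. exp (u' k))"
  have Dp: "0 < D" unfolding D_def using D_pos[OF S] .
  have D'p: "0 < D'" unfolding D'_def using D_pos[OF S] .
  have ek: "exp (u' k) \<le> exp M * exp (u k)" if "k \<in> S" for k
  proof -
    have "u' k \<le> M + u k" using d that by auto
    then show ?thesis by (simp add: exp_add[symmetric])
  qed
  have "D' \<le> exp M * D"
  proof -
    have "(\<Sum>k\<in>S. exp (u' k)) \<le> (\<Sum>k\<in>S. exp M * exp (u k))" using ek by (rule sum_mono)
    hence s: "(\<Sum>k\<in>S. exp (u' k)) \<le> exp M * (\<Sum>k\<in>S. exp (u k))" by (simp add: sum_distrib_left)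
    moreover have "1 \<le> exp M" using M by simp
    moreover have "exp M * D = exp M + exp M * (\<Sum>k\<in>S. exp (u k))" by (simp add: D_def algebra_simps)
    ultimately show ?thesis unfolding D'_def by linarith
  qed
  hence DD: "1 / D' \<ge> exp (-M) / D"
    using Dp D'p by (simp add: field_simps exp_minus)
  have q0: "1 / D' \<ge> exp (-2*M) * (1 / D)"
  proof -
    have "exp (-2*M) \<le> exp (-M)" using M by simp
    hence "exp (-2*M) / D \<le> exp (-M) / D" using Dp by (simp add: divide_right_mono)
    thus ?thesis using DD by simp
  qed
  have qj: "qq u' S j \<ge> exp (-2*M) * qq u S j" if "j \<in> S" for j
  proof -
    have "u j - M \<le> u' j" using d that by auto
    hence e1: "exp (u j - M) \<le> exp (u' j)" by simp
    have "exp (-2*M) * qq u S j = exp (u j - M) * (exp (-M) / D)"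
      unfolding qq_def D_def[symmetric]
      by (simp add: exp_diff exp_minus field_simps power2_eq_square exp_add[symmetric] mult_exp_exp)
    also have "\<dots> \<le> exp (u' j) * (1 / D')"
      by (rule mult_mono[OF e1 DD]) (use Dp in auto)
    finally show ?thesis unfolding qq_def D'_def by simp
  qed
  define A' where "A' = (\<Sum>j\<in>S. qq u' S j * a j)"
  have "exp (-2*M) * VV u S a \<le> exp (-2*M) * ((1/D) * A'^2 + (\<Sum>j\<in>S. qq u S j * (a j - A')^2))"
  proof -
    have "VV u S a \<le> (1/D) * A'^2 + (\<Sum>j\<in>S. qq u S j * (a j - A')^2)"
      using F_identity[OF qq_total[OF S, of u], where m=A' and a=a] unfolding VV_def D_def by simp
    thus ?thesis by simp
  qed
  also have "\<dots> = (exp (-2*M) * (1/D)) * A'^2 + (\<Sum>j\<in>S. (exp (-2*M) * qq u S j) * (a j - A')^2)"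
    by (simp add: algebra_simps sum_distrib_left)
  also have "\<dots> \<le> (1/D') * A'^2 + (\<Sum>j\<in>S. qq u' S j * (a j - A')^2)"
    using q0 qj by (intro add_mono mult_right_mono sum_mono) auto
  also have "\<dots> = VV u' S a"
    using VV_eq[OF S, of u' a] unfolding A'_def D'_def by simp
  finally show ?thesis .
qed

lemma phi_bound: assumes "0 \<le> z" shows "exp z \<le> 1 + 2 * phi z"
proof (cases "z = 0")
  case True then show ?thesis by (simp add: phi_def)
next
  case False
  hence zp: "0 < z" using assms by simp
  define E where "E = exp z"
  have E: "1 + z + z^2/2 \<le> E" unfolding E_def using exp_lower_Taylor_quadratic[OF assms] .
  have "(2 + z) * (1 + z + z^2/2) \<le> (2 + z) * E" using E zp by (intro mult_left_mono) auto
  moreover have "0 \<le> z ^ 3" using zp by simp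
  moreover have "(2+z)*(1+z+z^2/2) = 2 + 3*z + 2*z^2 + z^3/2"
    by (simp add: power2_eq_square power3_eq_cube algebra_simps)
  moreover have "z + 2*(E-1-z)*(1+z) - z*E = (2+z)*E - (2 + 3*z + 2*z^2)"
    by (simp add: power2_eq_square algebra_simps)
  ultimately have key: "z * E \<le> z + 2 * (E - 1 - z) * (1 + z)"
    by linarith
  have "1 + 2 * phi z = 1 + 2 * ((E - 1) / z - 1) * (1 + z)"
    using False by (simp add: phi_def E_def)
  also have "\<dots> = (z + 2 * (E - 1 - z) * (1 + z)) / z"
    using zp by (simp add: field_simps)
  finally have "1 + 2 * phi z = (z + 2 * (E - 1 - z) * (1 + z)) / z" .
  moreover have "E \<le> (z + 2 * (E - 1 - z) * (1 + z)) / z"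
    using key zp by (simp add: field_simps)
  ultimately show ?thesis unfolding E_def by simp
qed

lemma QF_H: "QF (mnl_H t S x \<theta>) v = (\<Sum>m\<in>{1..t}. VV (\<lambda>j. x m j \<bullet> \<theta>) (S m) (\<lambda>j. v \<bullet> x m j))"
proof -
  have "QF (mnl_H t S x \<theta>) v = (\<Sum>m\<in>{1..t}.
      (\<Sum>j\<in>S m. mnl_q S x \<theta> m j * (v \<bullet> x m j)^2)
    - (\<Sum>i\<in>S m. \<Sum>j\<in>S m. (mnl_q S x \<theta> m i * mnl_q S x \<theta> m j) * ((v \<bullet> x m i) * (v \<bullet> x m j))))"
    unfolding mnl_H_def by (simp add: QF_sum QF_diff QF_scale QF_outer power2_eq_square)
  also have "\<dots> = (\<Sum>m\<in>{1..t}. VV (\<lambda>j. x m j \<bullet> \<theta>) (S m) (\<lambda>j. v \<bullet> x m j))"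
    unfolding VV_def qq_def mnl_q_def
    by (intro sum.cong refl) (simp add: power2_eq_square sum_product algebra_simps)
  finally show ?thesis .
qed

theorem propositionB1:
  fixes t N :: nat and S :: "nat \<Rightarrow> nat set" and x :: "nat \<Rightarrow> nat \<Rightarrow> real^'d"
    and \<theta>s \<theta> :: "real^'d"
  assumes "\<forall>m\<in>{1..t}. S m \<subseteq> {1..N}"
  shows "loewner_le ((1 / (1 + 2 * phi (zeta t S x \<theta> \<theta>s))) *\<^sub>R mnl_H t S x \<theta>s) (mnl_H t S x \<theta>)
       \<and> loewner_le (mnl_H t S x \<theta>) ((1 + 2 * phi (zeta t S x \<theta> \<theta>s)) *\<^sub>R mnl_H t S x \<theta>s)"
proof -
  have fin: "finite (S m)" if "m \<in> {1..t}" for m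
    using assms that finite_subset by blast
  define Z where "Z = {\<bar>x m j \<bullet> (\<theta> - \<theta>s)\<bar> | m j. m \<in> {1..t} \<and> j \<in> S m}"
  define M where "M = Max (insert 0 Z)"
  have "Z = (\<lambda>(m,j). \<bar>x m j \<bullet> (\<theta> - \<theta>s)\<bar>) ` (SIGMA m:{1..t}. S m)"
    unfolding Z_def by force
  hence finZ: "finite Z" using fin by (auto intro!: finite_imageI finite_SigmaI)
  have M0: "0 \<le> M" unfolding M_def using finZ by simp
  have Mb: "\<bar>x m j \<bullet> \<theta> - x m j \<bullet> \<theta>s\<bar> \<le> M" if "m \<in> {1..t}" "j \<in> S m" for m j
  proof -
    have "\<bar>x m j \<bullet> (\<theta> - \<theta>s)\<bar> \<in> insert 0 Z" unfolding Z_def using that by blast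
    hence "\<bar>x m j \<bullet> (\<theta> - \<theta>s)\<bar> \<le> M" unfolding M_def using finZ by simp
    thus ?thesis by (simp add: inner_diff_right)
  qed
  define z where "z = zeta t S x \<theta> \<theta>s"
  have zM: "z = 3 * sqrt 2 * M" unfolding z_def zeta_def M_def Z_def by simp
  have "2 * M \<le> z"
  proof -
    have "1 \<le> sqrt 2" by simp
    hence "2 \<le> 3 * sqrt 2" by linarith
    hence "2 * M \<le> 3 * sqrt 2 * M" using M0 by (rule mult_right_mono)
    thus ?thesis using zM by simp
  qed
  hence "exp (2*M) \<le> exp z" by simp
  also have "\<dots> \<le> 1 + 2 * phi z" using phi_bound zM M0 by simp
  finally have cb: "exp (2*M) \<le> 1 + 2 * phi z" .
  have cpos: "0 < 1 + 2 * phi z" using cb by (smt (verit) exp_gt_zero)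
  have inv: "1 / (1 + 2 * phi z) \<le> exp (-2*M)"
    using cb cpos by (simp add: exp_minus field_simps)
  show ?thesis
    unfolding z_def[symmetric] loewner_le_def QF_def[symmetric]
  proof (intro conjI allI)
    fix v
    let ?V = "\<lambda>\<theta>' m. VV (\<lambda>j. x m j \<bullet> \<theta>') (S m) (\<lambda>j. v \<bullet> x m j)"
    have nn: "0 \<le> (\<Sum>m\<in>{1..t}. ?V \<theta>s m)" by (rule sum_nonneg) (rule VV_nonneg[OF fin], assumption)
    have L: "exp (-2*M) * ?V \<theta>s m \<le> ?V \<theta> m" if "m \<in> {1..t}" for m
      using VV_lower[OF fin[OF that] M0] Mb[OF that] by simp
    have U: "exp (-2*M) * ?V \<theta> m \<le> ?V \<theta>s m" if "m \<in> {1..t}" for m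
      using VV_lower[OF fin[OF that] M0] Mb[OF that] by (simp add: abs_minus_commute)
    have "QF ((1 / (1 + 2 * phi z)) *\<^sub>R mnl_H t S x \<theta>s) v = (1 / (1 + 2 * phi z)) * (\<Sum>m\<in>{1..t}. ?V \<theta>s m)"
      by (simp add: QF_scale QF_H)
    also have "\<dots> \<le> exp (-2*M) * (\<Sum>m\<in>{1..t}. ?V \<theta>s m)"
      using inv nn by (rule mult_right_mono)
    also have "\<dots> \<le> (\<Sum>m\<in>{1..t}. ?V \<theta> m)"
      unfolding sum_distrib_left using L by (rule sum_mono)
    also have "\<dots> = QF (mnl_H t S x \<theta>) v" by (simp add: QF_H)
    finally show "QF ((1 / (1 + 2 * phi z)) *\<^sub>R mnl_H t S x \<theta>s) v \<le> QF (mnl_H t S x \<theta>) v" .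
    have U': "?V \<theta> m \<le> exp (2*M) * ?V \<theta>s m" if "m \<in> {1..t}" for m
    proof -
      have "?V \<theta> m = exp (2*M) * (exp (-2*M) * ?V \<theta> m)" by (simp add: mult.assoc[symmetric] exp_minus field_simps)
      also have "\<dots> \<le> exp (2*M) * ?V \<theta>s m" using U[OF that] by simp
      finally show ?thesis .
    qed
    have "QF (mnl_H t S x \<theta>) v = (\<Sum>m\<in>{1..t}. ?V \<theta> m)" by (simp add: QF_H)
    also have "\<dots> \<le> exp (2*M) * (\<Sum>m\<in>{1..t}. ?V \<theta>s m)"
      unfolding sum_distrib_left using U' by (rule sum_mono)
    also have "\<dots> \<le> (1 + 2 * phi z) * (\<Sum>m\<in>{1..t}. ?V \<theta>s m)"
      using cb nn by (rule mult_right_mono)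
    also have "\<dots> = QF ((1 + 2 * phi z) *\<^sub>R mnl_H t S x \<theta>s) v" by (simp add: QF_scale QF_H)
    finally show "QF (mnl_H t S x \<theta>) v \<le> QF ((1 + 2 * phi z) *\<^sub>R mnl_H t S x \<theta>s) v" .
  qed
qed

end
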